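(* Let $h$ be the two-dimensional Euclid's hat, let $0<\tilde s<s$ and $x_0\in\mathbb{R}^2$, and set $$\Delta(s,\tilde s,x_0,x_1,x_2)=\left(h(|x_0-x_1|/s)-h(|x_0-x_2|/s)\right)h(|x_1-x_2|/\tilde s).$$ Then $$\int_{\mathbb{R}^2\times\mathbb{R}^2}\left|\Delta(s,\tilde s,x_0,x_1,x_2)\right|dx_1\,dx_2\le\frac{\pi^2}{8}\,\tilde s^{\,3}s .$$
   Context: The Euclid's hat is $h:[0,\infty)\to[0,1]$, $h(w)=\frac{2}{\pi}(\arccos w-w\sqrt{1-w^2})$ for $0\le w\le1$, $h(w)=0$ for $w>1$; equivalently $h(|x|/s)=\frac{4}{\pi s^2}(\chi_{s/2}\ast\chi_{s/2})(x)$ where $\chi_r$ is the indicator of the disc of radius $r$ centered at $0$ in $\mathbb{R}^2$. *)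

theory Defs
  imports "HOL-Analysis.Analysis"
begin

definition euclid_hat :: "real \<Rightarrow> real" where
  "euclid_hat w = (if 0 \<le> w \<and> w \<le> 1
     then 2 / pi * (arccos w - w * sqrt (1 - w\<^sup>2)) else 0)"

definition hat_Delta :: "real \<Rightarrow> real \<Rightarrow> real^2 \<Rightarrow> real^2 \<Rightarrow> real^2 \<Rightarrow> real" where
  "hat_Delta s s' x0 x1 x2 =
     (euclid_hat (norm (x0 - x1) / s) - euclid_hat (norm (x0 - x2) / s))
       * euclid_hat (norm (x1 - x2) / s')"

end

theory Submission
  imports Defs
begin

definition F0 :: "real \<Rightarrow> real" where
  "F0 w = 2 / pi * (arccos w - w * sqrt (1 - w\<^sup>2))"

definition hc :: "real \<Rightarrow> real" where
  "hc w = F0 (max 0 (min w 1))"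

lemma euclid_hat_hc: "0 \<le> w \<Longrightarrow> euclid_hat w = hc w"
  by (auto simp: euclid_hat_def hc_def F0_def max_def min_def)

lemma continuous_F0: "continuous_on {0..1} F0"
  unfolding F0_def by (intro continuous_intros) auto

lemma continuous_hc: "continuous_on UNIV hc"
proof -
  have "continuous_on UNIV (\<lambda>w::real. max 0 (min w 1))" by (intro continuous_intros)
  moreover have "(\<lambda>w::real. max 0 (min w 1)) ` UNIV \<subseteq> {0..1}" by auto
  ultimately show ?thesis unfolding hc_def
    using continuous_on_compose[of UNIV "\<lambda>w::real. max 0 (min w 1)" F0] continuous_F0
      continuous_on_subset by (auto simp: comp_def)
qed

lemma hc_measurable[measurable]: "hc \<in> borel_measurable borel"
  using continuous_hc by (rule borel_measurable_continuous_onI)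

lemma F0_deriv:
  assumes "0 < w" "w < 1"
  shows "(F0 has_real_derivative (- 4 / pi * sqrt (1 - w\<^sup>2))) (at w)"
proof -
  have "w\<^sup>2 < 1\<^sup>2" using assms by (intro power_strict_mono) auto
  then have pos: "0 < 1 - w\<^sup>2" by simp
  have "(F0 has_real_derivative 2 / pi * (inverse (- sqrt (1 - w\<^sup>2)) - (1 * sqrt (1 - w\<^sup>2) + w * (inverse (sqrt (1 - w\<^sup>2)) / 2 * (- (2 * w)))))) (at w)"
    unfolding F0_def
    using assms pos
    by (auto intro!: derivative_eq_intros DERIV_arccos simp: )
  moreover have "2 / pi * (inverse (- sqrt (1 - w\<^sup>2)) - (1 * sqrt (1 - w\<^sup>2) + w * (inverse (sqrt (1 - w\<^sup>2)) / 2 * (- (2 * w)))))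
     = - 4 / pi * sqrt (1 - w\<^sup>2)"
  proof -
    have sq: "sqrt (1 - w\<^sup>2) * sqrt (1 - w\<^sup>2) = 1 - w\<^sup>2" using pos by simp
    have nz: "sqrt (1 - w\<^sup>2) \<noteq> 0" using pos by simp
    show ?thesis using sq nz by (simp add: field_simps) (simp add: algebra_simps power2_eq_square)
  qed
  ultimately show ?thesis by simp
qed

definition Lw :: "real \<Rightarrow> real \<Rightarrow> real" where
  "Lw s r = 4 / (pi * s) * sqrt (max 0 (1 - (r / s)\<^sup>2))"

lemma Lw_nonneg: "0 < s \<Longrightarrow> 0 \<le> Lw s r"
  by (simp add: Lw_def)

lemma Lw_measurable[measurable]: "Lw s \<in> borel_measurable borel"
  unfolding Lw_def by measurable

lemma hc_ge1: "1 \<le> w \<Longrightarrow> hc w = 0"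
  by (simp add: hc_def F0_def)

lemma H_deriv:
  assumes s: "0 < s" and r: "0 < r" "r \<noteq> s"
  shows "((\<lambda>r. - hc (r / s)) has_real_derivative Lw s r) (at r)"
proof (cases "r < s")
  case True
  have w: "0 < r / s" "r / s < 1" using True s r by auto
  have d: "((\<lambda>r. - F0 (r / s)) has_real_derivative (- (- 4 / pi * sqrt (1 - (r/s)\<^sup>2) * (1 / s)))) (at r)"
  proof -
    have g: "((\<lambda>r. r / s) has_real_derivative 1 / s) (at r)"
      using s by (auto intro!: derivative_eq_intros)
    show ?thesis using DERIV_minus[OF DERIV_chain2[OF F0_deriv[OF w] g]] by simp
  qed
  have "(- (- 4 / pi * sqrt (1 - (r/s)\<^sup>2) * (1 / s))) = Lw s r"
  proof -
    have "(r/s)\<^sup>2 < 1\<^sup>2" using w by (intro power_strict_mono) auto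
    then show ?thesis by (simp add: Lw_def max_def)
  qed
  with d have d2: "((\<lambda>r. - F0 (r / s)) has_real_derivative Lw s r) (at r)" by simp
  show ?thesis
  proof (rule has_field_derivative_transform_within_open[OF d2, of "{0<..<s}"])
    show "r \<in> {0<..<s}" using True r by auto
    fix x assume "x \<in> {0<..<s}"
    then have "0 < x / s" "x / s < 1" using s by auto
    then show "- F0 (x / s) = - hc (x / s)" by (simp add: hc_def)
  qed auto
next
  case False
  then have rs: "s < r" using r by auto
  have "(1 - (r / s)\<^sup>2) \<le> 0" using rs s by (simp add: power2_eq_square field_simps) (smt (verit) mult_mono)
  then have L0: "Lw s r = 0" by (simp add: Lw_def max_def)
  have d: "((\<lambda>r. 0::real) has_real_derivative 0) (at r)" by simp
  show ?thesis unfolding L0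
  proof (rule has_field_derivative_transform_within_open[OF d, of "{s<..}"])
    fix x assume "x \<in> {s<..}"
    then have "1 \<le> x / s" using s by auto
    then show "0 = - hc (x / s)" by (simp add: hc_ge1)
  qed (use rs in auto)
qed

lemma H_ftc:
  assumes s: "0 < s" and pq: "0 \<le> p" "p \<le> q"
  shows "(Lw s has_integral (hc (p / s) - hc (q / s))) {p..q}"
proof -
  have "(Lw s has_integral ((\<lambda>r. - hc (r / s)) q - (\<lambda>r. - hc (r / s)) p)) {p..q}"
  proof (rule fundamental_theorem_of_calculus_interior_strong[of "{s}"])
    fix x assume "x \<in> {p<..<q} - {s}"
    then have "0 < x" "x \<noteq> s" using pq by auto
    then show "((\<lambda>r. - hc (r / s)) has_vector_derivative Lw s x) (at x)"
      using H_deriv[OF s] by (simp add: has_real_derivative_iff_has_vector_derivative)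
  next
    show "continuous_on {p..q} (\<lambda>r. - hc (r / s))"
      using continuous_hc s by (intro continuous_intros continuous_on_compose2[OF continuous_hc]) auto
  qed (use pq in auto)
  then show ?thesis by simp
qed

lemma Lw_antimono:
  assumes s: "0 < s" and uv: "0 \<le> u" "u \<le> v"
  shows "Lw s v \<le> Lw s u"
proof -
  have "(u/s)\<^sup>2 \<le> (v/s)\<^sup>2" using uv s by (intro power_mono divide_right_mono) auto
  then have "max 0 (1 - (v / s)\<^sup>2) \<le> max 0 (1 - (u / s)\<^sup>2)" by simp
  then have "sqrt (max 0 (1 - (v / s)\<^sup>2)) \<le> sqrt (max 0 (1 - (u / s)\<^sup>2))" by simp
  then show ?thesis unfolding Lw_def using s by (intro mult_left_mono) auto
qed

lemma H_seg_aux: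
  fixes a b :: "real^2"
  assumes s: "0 < s" and ab: "norm a \<le> norm b"
  shows "hc (norm b / s) \<le> hc (norm a / s)"
    and "ennreal (hc (norm a / s) - hc (norm b / s)) \<le> ennreal (norm (b - a)) *
           (\<integral>\<^sup>+t. ennreal (indicator {0..1} t * Lw s (norm (a + t *\<^sub>R (b - a)))) \<partial>lborel)"
proof -
  define p where "p = norm a"
  define q where "q = norm b"
  have pq: "0 \<le> p" "p \<le> q" using ab by (auto simp: p_def q_def)
  have I: "(Lw s has_integral (hc (p / s) - hc (q / s))) {p..q}" by (rule H_ftc[OF s pq])
  have "0 \<le> hc (p / s) - hc (q / s)"
    by (rule has_integral_nonneg[OF I]) (use Lw_nonneg[OF s] in auto)
  then show "hc (norm b / s) \<le> hc (norm a / s)" by (simp add: p_def q_def)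
  have E1: "(\<integral>\<^sup>+r. ennreal (indicator {p..q} r * Lw s r) \<partial>lborel) = ennreal (hc (p / s) - hc (q / s))"
    by (rule nn_integral_has_integral_lebesgue[OF _ I]) (use Lw_nonneg[OF s] in auto)
  show "ennreal (hc (norm a / s) - hc (norm b / s)) \<le> ennreal (norm (b - a)) *
           (\<integral>\<^sup>+t. ennreal (indicator {0..1} t * Lw s (norm (a + t *\<^sub>R (b - a)))) \<partial>lborel)"
  proof (cases "p = q")
    case True
    then show ?thesis by (simp add: p_def q_def)
  next
    case False
    then have pq': "p < q" using pq by auto
    have "ennreal (hc (p / s) - hc (q / s)) = ennreal \<bar>q - p\<bar> *
        (\<integral>\<^sup>+x. ennreal (indicator {p..q} (p + (q - p) * x) * Lw s (p + (q - p) * x)) \<partial>lborel)"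
      unfolding E1[symmetric]
      by (rule nn_integral_real_affine) (use pq' in auto)
    also have "\<dots> \<le> ennreal (norm (b - a)) *
           (\<integral>\<^sup>+t. ennreal (indicator {0..1} t * Lw s (norm (a + t *\<^sub>R (b - a)))) \<partial>lborel)"
    proof (rule mult_mono)
      show "ennreal \<bar>q - p\<bar> \<le> ennreal (norm (b - a))"
        using pq' norm_triangle_ineq2[of b a] by (auto simp: p_def q_def)
      show "(\<integral>\<^sup>+x. ennreal (indicator {p..q} (p + (q - p) * x) * Lw s (p + (q - p) * x)) \<partial>lborel)
          \<le> (\<integral>\<^sup>+t. ennreal (indicator {0..1} t * Lw s (norm (a + t *\<^sub>R (b - a)))) \<partial>lborel)"
      proof (rule nn_integral_mono)
        fix x :: real
        show "ennreal (indicator {p..q} (p + (q - p) * x) * Lw s (p + (q - p) * x))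
           \<le> ennreal (indicator {0..1} x * Lw s (norm (a + x *\<^sub>R (b - a))))"
        proof (cases "x \<in> {0..1}")
          case True
          then have x: "0 \<le> x" "x \<le> 1" by auto
          have "(q-p)*x \<le> (q-p)" using mult_left_le[of x "q-p"] x pq' by auto
          then have "p + (q - p) * x \<le> q" by linarith
          moreover have "p \<le> p + (q - p) * x" using x pq' by simp
          ultimately have ind: "p + (q - p) * x \<in> {p..q}" by simp
          have "a + x *\<^sub>R (b - a) = (1 - x) *\<^sub>R a + x *\<^sub>R b" by (simp add: algebra_simps)
          then have "norm (a + x *\<^sub>R (b - a)) \<le> (1 - x) * p + x * q"
            using norm_triangle_ineq[of "(1 - x) *\<^sub>R a" "x *\<^sub>R b"] x by (simp add: p_def q_def)
          also have "\<dots> = p + (q - p) * x" by (simp add: algebra_simps)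
          finally have "Lw s (p + (q - p) * x) \<le> Lw s (norm (a + x *\<^sub>R (b - a)))"
            by (intro Lw_antimono[OF s]) auto
          then show ?thesis using True ind by (auto intro: ennreal_leI)
        next
          case False
          then consider "x < 0" | "1 < x" by force
          then have "p + (q - p) * x \<notin> {p..q}"
          proof cases
            case 1
            then have "(q - p) * x < 0" using pq' by (simp add: mult_pos_neg)
            then show ?thesis by auto
          next
            case 2
            then have "(q - p) * 1 < (q - p) * x" using pq' by (intro mult_strict_left_mono) auto
            then show ?thesis by auto
          qed
          then show ?thesis using False by auto
        qed
      qed
    qed auto
    finally show ?thesis by (simp add: p_def q_def)
  qed
qed

lemma H_seg:
  fixes a b :: "real^2"
  assumes s: "0 < s"
  shows "ennreal \<bar>hc (norm b / s) - hc (norm a / s)\<bar> \<le> ennreal (norm (b - a)) *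
           (\<integral>\<^sup>+t. ennreal (indicator {0..1} t * Lw s (norm (a + t *\<^sub>R (b - a)))) \<partial>lborel)"
proof (cases "norm a \<le> norm b")
  case True
  show ?thesis using H_seg_aux[OF s True] by (simp add: abs_if)
next
  case False
  then have ba: "norm b \<le> norm a" by simp
  have "ennreal \<bar>hc (norm b / s) - hc (norm a / s)\<bar> = ennreal (hc (norm b / s) - hc (norm a / s))"
    using H_seg_aux(1)[OF s ba] by simp
  also have "\<dots> \<le> ennreal (norm (a - b)) *
           (\<integral>\<^sup>+t. ennreal (indicator {0..1} t * Lw s (norm (b + t *\<^sub>R (a - b)))) \<partial>lborel)"
    by (rule H_seg_aux(2)[OF s ba])
  also have "(\<integral>\<^sup>+t. ennreal (indicator {0..1} t * Lw s (norm (b + t *\<^sub>R (a - b)))) \<partial>lborel)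
      = (\<integral>\<^sup>+t. ennreal (indicator {0..1} t * Lw s (norm (a + t *\<^sub>R (b - a)))) \<partial>lborel)"
  proof -
    have "(\<integral>\<^sup>+t. ennreal (indicator {0..1} t * Lw s (norm (a + t *\<^sub>R (b - a)))) \<partial>lborel)
      = ennreal \<bar>-1\<bar> * (\<integral>\<^sup>+t. ennreal (indicator {0..1} (1 + -1 * t) * Lw s (norm (a + (1 + -1 * t) *\<^sub>R (b - a)))) \<partial>lborel)"
      by (rule nn_integral_real_affine) auto
    also have "\<dots> = (\<integral>\<^sup>+t. ennreal (indicator {0..1} t * Lw s (norm (b + t *\<^sub>R (a - b)))) \<partial>lborel)"
    proof -
      have "\<And>t::real. indicator {0..1} (1 + -1 * t) = (indicator {0..1} t :: real)"
        by (auto simp: indicator_def)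
      moreover have "\<And>t::real. a + (1 + -1 * t) *\<^sub>R (b - a) = b + t *\<^sub>R (a - b)"
        by (simp add: algebra_simps)
      ultimately show ?thesis by simp
    qed
    finally show ?thesis by simp
  qed
  finally show ?thesis by (simp add: norm_minus_commute)
qed

lemma disc_ftc:
  assumes "0 \<le> a"
  shows "((\<lambda>r::real. 2 * pi * r) has_integral pi * a\<^sup>2) {0..a}"
proof -
  have "((\<lambda>r::real. 2 * pi * r) has_integral ((\<lambda>r. pi * r\<^sup>2) a - (\<lambda>r. pi * r\<^sup>2) 0)) {0..a}"
    by (rule fundamental_theorem_of_calculus)
       (use assms in \<open>auto intro!: derivative_eq_intros simp: has_real_derivative_iff_has_vector_derivative[symmetric]\<close>)
  then show ?thesis by simp
qed

lemma distr_norm2: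
  "distr (lborel :: (real^2) measure) borel norm = density lborel (\<lambda>r. ennreal (indicator {0..} r * (2 * pi * r)))"
proof (rule measure_eqI_generator_eq[where \<Omega>=UNIV and E="range (\<lambda>a. {..a::real})" and A="\<lambda>i. {..real i}"])
  show "Int_stable (range (\<lambda>a. {..a::real}))"
    unfolding Int_stable_def by auto
  show "range (\<lambda>a. {..a::real}) \<subseteq> Pow UNIV" by auto
  have sb: "sets (borel :: real measure) = sigma_sets UNIV (range (\<lambda>a. {..a::real}))"
    by (subst borel_eq_atMost) (simp add: sets_measure_of)
  show "sets (distr (lborel :: (real^2) measure) borel norm) = sigma_sets UNIV (range (\<lambda>a. {..a::real}))"
    using sb by simp
  show "sets (density lborel (\<lambda>r. ennreal (indicator {0..} r * (2 * pi * r)))) = sigma_sets UNIV (range (\<lambda>a. {..a::real}))"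
    using sb by simp
  have D: "emeasure (distr (lborel :: (real^2) measure) borel norm) {..a} = ennreal (if 0 \<le> a then pi * a\<^sup>2 else 0)" for a :: real
  proof -
    have "emeasure (distr (lborel :: (real^2) measure) borel norm) {..a} = emeasure lborel (norm -` {..a} :: (real^2) set)"
      by (subst emeasure_distr) auto
    also have "norm -` {..a} = (cball 0 a :: (real^2) set)" by auto
    also have "emeasure lborel (cball 0 a :: (real^2) set) = ennreal (if 0 \<le> a then pi * a\<^sup>2 else 0)"
      by (cases "0 \<le> a") (auto simp: emeasure_cball unit_ball_vol_2)
    finally show ?thesis .
  qed
  show "emeasure (distr (lborel :: (real^2) measure) borel norm) X = emeasure (density lborel (\<lambda>r. ennreal (indicator {0..} r * (2 * pi * r)))) X"
    if "X \<in> range (\<lambda>a. {..a::real})" for X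
  proof -
    from that obtain a where X: "X = {..a}" by auto
    have "emeasure (density lborel (\<lambda>r. ennreal (indicator {0..} r * (2 * pi * r)))) {..a}
       = (\<integral>\<^sup>+r. ennreal (indicator {0..} r * (2 * pi * r)) * indicator {..a} r \<partial>lborel)"
      by (rule emeasure_density) auto
    also have "\<dots> = (\<integral>\<^sup>+r. ennreal (indicator {0..a} r * (2 * pi * r)) \<partial>lborel)"
      by (intro nn_integral_cong) (auto simp: indicator_def)
    also have "\<dots> = ennreal (if 0 \<le> a then pi * a\<^sup>2 else 0)"
    proof (cases "0 \<le> a")
      case True
      show ?thesis using nn_integral_has_integral_lebesgue[OF _ disc_ftc[OF True]] True by simp
    next
      case False
      then have "{0..a} = {}" by auto
      then show ?thesis using False by simp
    qed
    finally show ?thesis using D X by simp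
  qed
  show "range (\<lambda>i. {..real i}) \<subseteq> range (\<lambda>a. {..a::real})" by auto
  show "(\<Union>i. {..real i}) = UNIV" by (auto intro: real_arch_simple)
  show "emeasure (distr (lborel :: (real^2) measure) borel norm) {..real i} \<noteq> \<infinity>" for i
    using D by simp
qed

lemma polar:
  fixes f :: "real \<Rightarrow> ennreal"
  assumes [measurable]: "f \<in> borel_measurable borel"
  shows "(\<integral>\<^sup>+(z::real^2). f (norm z) \<partial>lborel) = (\<integral>\<^sup>+r. ennreal (indicator {0..} r * (2 * pi * r)) * f r \<partial>lborel)"
proof -
  have "(\<integral>\<^sup>+(z::real^2). f (norm z) \<partial>lborel) = (\<integral>\<^sup>+r. f r \<partial>(distr (lborel :: (real^2) measure) borel norm))"
    by (subst nn_integral_distr) auto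
  also have "\<dots> = (\<integral>\<^sup>+r. ennreal (indicator {0..} r * (2 * pi * r)) * f r \<partial>lborel)"
    unfolding distr_norm2 by (subst nn_integral_density) auto
  finally show ?thesis .
qed

lemma Lw_zero: "0 < s \<Longrightarrow> s \<le> r \<Longrightarrow> Lw s r = 0"
proof -
  assume s: "0 < s" and r: "s \<le> r"
  have "1\<^sup>2 \<le> (r / s)\<^sup>2" using s r by (intro power_mono) auto
  then show ?thesis by (simp add: Lw_def max_def)
qed

lemma Lw_ftc:
  assumes s: "0 < s"
  shows "((\<lambda>r. 2 * pi * r * Lw s r) has_integral 8 * s / 3) {0..s}"
proof -
  define A where "A r = - (8 * s / 3) * ((1 - (r/s)\<^sup>2) * sqrt (1 - (r/s)\<^sup>2))" for r
  have "((\<lambda>r. 2 * pi * r * Lw s r) has_integral (A s - A 0)) {0..s}"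
  proof (rule fundamental_theorem_of_calculus_interior)
    show "continuous_on {0..s} A" unfolding A_def using s by (intro continuous_intros) auto
    fix r assume r: "r \<in> {0<..<s}"
    then have w: "0 < r / s" "r / s < 1" using s by auto
    have "(r/s)\<^sup>2 < 1\<^sup>2" using w by (intro power_strict_mono) auto
    then have u: "0 < 1 - (r/s)\<^sup>2" by simp
    have "(A has_real_derivative (- (8 * s / 3) * ((- (2 * (r/s) * (1/s))) * sqrt (1 - (r/s)\<^sup>2)
            + (1 - (r/s)\<^sup>2) * (inverse (sqrt (1 - (r/s)\<^sup>2)) / 2 * (- (2 * (r/s) * (1/s))))))) (at r)"
      unfolding A_def using u s
      by (auto intro!: derivative_eq_intros simp: power2_eq_square)
    moreover have "(- (8 * s / 3) * ((- (2 * (r/s) * (1/s))) * sqrt (1 - (r/s)\<^sup>2)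
            + (1 - (r/s)\<^sup>2) * (inverse (sqrt (1 - (r/s)\<^sup>2)) / 2 * (- (2 * (r/s) * (1/s))))))
          = 2 * pi * r * Lw s r"
    proof -
      have nz: "sqrt (1 - (r/s)\<^sup>2) \<noteq> 0" "1 - (r/s)\<^sup>2 \<noteq> 0" using u by auto
      have sq: "sqrt (1 - (r/s)\<^sup>2) * sqrt (1 - (r/s)\<^sup>2) = 1 - (r/s)\<^sup>2" using u by simp
      have iq: "inverse (sqrt (1 - (r/s)\<^sup>2)) = sqrt (1 - (r/s)\<^sup>2) / (1 - (r/s)\<^sup>2)"
        using sq nz by (simp add: field_simps)
      have aux: "\<And>U Q. U \<noteq> 0 \<Longrightarrow> (- (8 * s / 3)) * ((-(2 * (r / s) * (1 / s))) * Q + U * ((Q / U) / 2 * (-(2 * (r / s) * (1 / s)))))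
          = 2 * pi * r * (4 / (pi * s) * Q)" using s by (simp add: field_simps)
      have L: "Lw s r = 4 / (pi * s) * sqrt (1 - (r/s)\<^sup>2)" using u by (simp add: Lw_def)
      show ?thesis unfolding L iq using aux[OF nz(2), of "sqrt (1 - (r/s)\<^sup>2)"] by simp
    qed
    ultimately show "(A has_vector_derivative 2 * pi * r * Lw s r) (at r)" by (simp add: has_real_derivative_iff_has_vector_derivative)
  qed (use s in auto)
  moreover have "A s - A 0 = 8 * s / 3" using s by (simp add: A_def)
  ultimately show ?thesis by simp
qed

lemma int_Lw:
  assumes s: "0 < s"
  shows "(\<integral>\<^sup>+(z::real^2). ennreal (Lw s (norm z)) \<partial>lborel) = ennreal (8 * s / 3)"
proof -
  have "(\<integral>\<^sup>+(z::real^2). ennreal (Lw s (norm z)) \<partial>lborel)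
      = (\<integral>\<^sup>+r. ennreal (indicator {0..} r * (2 * pi * r)) * ennreal (Lw s r) \<partial>lborel)"
    by (rule polar) measurable
  also have "\<dots> = (\<integral>\<^sup>+r. ennreal (indicator {0..s} r * (2 * pi * r * Lw s r)) \<partial>lborel)"
  proof (rule nn_integral_cong)
    fix r :: real
    show "ennreal (indicator {0..} r * (2 * pi * r)) * ennreal (Lw s r) = ennreal (indicator {0..s} r * (2 * pi * r * Lw s r))"
      using Lw_zero[OF s, of r] Lw_nonneg[OF s, of r]
      by (cases "0 \<le> r"; cases "r \<le> s") (auto simp: indicator_def ennreal_mult[symmetric] mult.assoc)
  qed
  also have "\<dots> = ennreal (8 * s / 3)"
    by (rule nn_integral_has_integral_lebesgue[OF _ Lw_ftc[OF s]]) (use Lw_nonneg[OF s] in auto)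
  finally show ?thesis .
qed

lemma F0_chain[derivative_intros]:
  assumes "(g has_real_derivative g') (at x within S)" "0 < g x" "g x < 1"
  shows "((\<lambda>x. F0 (g x)) has_real_derivative (- 4 / pi * sqrt (1 - (g x)\<^sup>2)) * g') (at x within S)"
  using DERIV_chain2[OF F0_deriv[OF assms(2,3)] assms(1)] .

definition FF :: "real \<Rightarrow> real" where
  "FF w = w ^ 3 / 3 * F0 w + 4 / (3 * pi) * (1 / 5 * (1 - w\<^sup>2)\<^sup>2 * sqrt (1 - w\<^sup>2) - 1 / 3 * (1 - w\<^sup>2) * sqrt (1 - w\<^sup>2))"

lemma aux_FF:
  fixes w Q F p :: real
  assumes "p \<noteq> 0" "1 - w\<^sup>2 \<noteq> 0"
  shows "(9 * (w\<^sup>2 * F) - 12 * (Q * w ^ 3) / p) / 9 +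
        ((- (240 * (w * ((1 - w\<^sup>2) * Q))) -
          120 * (Q * (w * (1 - w\<^sup>2)\<^sup>2)) / (2 - w\<^sup>2 * 2)) /
         25 -
         (- (72 * (w * Q)) -
          72 * (Q * (w * (1 - w\<^sup>2))) / (2 - w\<^sup>2 * 2)) /
         9) /
        (9 * p) =
        w\<^sup>2 * F"
proof -
  define U where "U = 1 - w\<^sup>2"
  have U: "U \<noteq> 0" using assms by (simp add: U_def)
  have e: "2 - w\<^sup>2 * 2 = 2 * U" by (simp add: U_def)
  have w2: "w ^ 3 = w * w\<^sup>2" by (simp add: power3_eq_cube power2_eq_square)
  have w2': "w\<^sup>2 = 1 - U" by (simp add: U_def)
  show ?thesis unfolding U_def[symmetric] e w2 w2' using U assms(1)
    by (simp add: field_simps) (simp add: algebra_simps power2_eq_square)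
qed

lemma FF_deriv:
  assumes w: "0 < w" "w < 1"
  shows "(FF has_real_derivative w\<^sup>2 * F0 w) (at w)"
proof -
  have "w\<^sup>2 < 1\<^sup>2" using w by (intro power_strict_mono) auto
  then have u: "0 < 1 - w\<^sup>2" by simp
  have nz: "sqrt (1 - w\<^sup>2) \<noteq> 0" "1 - w\<^sup>2 \<noteq> 0" using u by auto
  have sq: "sqrt (1 - w\<^sup>2) * sqrt (1 - w\<^sup>2) = 1 - w\<^sup>2" using u by simp
  have iq: "inverse (sqrt (1 - w\<^sup>2)) = sqrt (1 - w\<^sup>2) / (1 - w\<^sup>2)"
    using sq nz by (simp add: field_simps)
  have nz2: "2 - w\<^sup>2 * 2 \<noteq> 0" using u by simp
  show ?thesis unfolding FF_def using w u nz
    apply (auto intro!: derivative_eq_intros simp: iq)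
    apply (rule aux_FF)
    using nz by auto
qed

lemma hc_nonneg: "0 \<le> hc w"
proof -
  define c where "c = max 0 (min w 1)"
  have c: "0 \<le> c" "c \<le> 1" by (auto simp: c_def)
  have "0 \<le> hc (c / 1) - hc (1 / 1)"
    by (rule has_integral_nonneg[OF H_ftc[of 1 c 1]]) (use c Lw_nonneg[of 1] in auto)
  moreover have "hc c = hc w" using c by (simp add: hc_def c_def)
  moreover have "hc 1 = 0" by (simp add: hc_ge1)
  ultimately show ?thesis by simp
qed

lemma K_ftc:
  assumes t: "0 < t"
  shows "((\<lambda>r. 2 * pi * r * (hc (r / t) * r)) has_integral 16 / 45 * t ^ 3) {0..t}"
proof -
  define G where "G r = 2 * pi * t ^ 3 * FF (r / t)" for r
  have "((\<lambda>r. 2 * pi * r * (hc (r / t) * r)) has_integral (G t - G 0)) {0..t}"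
  proof (rule fundamental_theorem_of_calculus_interior)
    have "continuous_on {0..1} FF" unfolding FF_def
      by (intro continuous_intros continuous_on_subset[OF continuous_F0]) auto
    then show "continuous_on {0..t} G" unfolding G_def using t
      by (intro continuous_on_mult continuous_on_const continuous_on_compose2[of "{0..1}" FF "{0..t}" "\<lambda>r. r / t"])
         (auto intro!: continuous_intros)
    fix r assume r: "r \<in> {0<..<t}"
    then have w: "0 < r / t" "r / t < 1" using t by auto
    have g: "((\<lambda>r. r / t) has_real_derivative 1 / t) (at r)"
      using t by (auto intro!: derivative_eq_intros)
    have "(G has_real_derivative 2 * pi * t ^ 3 * ((r / t)\<^sup>2 * F0 (r / t) * (1 / t))) (at r)"
      unfolding G_def by (intro DERIV_cmult DERIV_chain2[OF FF_deriv[OF w] g])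
    moreover have "2 * pi * t ^ 3 * ((r / t)\<^sup>2 * F0 (r / t) * (1 / t)) = 2 * pi * r * (hc (r / t) * r)"
    proof -
      have "hc (r / t) = F0 (r / t)" using w by (simp add: hc_def)
      then show ?thesis using t by (simp add: field_simps power2_eq_square power3_eq_cube)
    qed
    ultimately show "(G has_vector_derivative 2 * pi * r * (hc (r / t) * r)) (at r)"
      by (simp add: has_real_derivative_iff_has_vector_derivative)
  qed (use t in auto)
  moreover have "G t - G 0 = 16 / 45 * t ^ 3"
  proof -
    have "FF 1 = 0" by (simp add: FF_def F0_def)
    moreover have "FF 0 = - 8 / (45 * pi)" by (simp add: FF_def F0_def)
    ultimately show ?thesis using t by (simp add: G_def)
  qed
  ultimately show ?thesis by simp
qed

lemma int_K:
  assumes t: "0 < t"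
  shows "(\<integral>\<^sup>+(y::real^2). ennreal (hc (norm y / t) * norm y) \<partial>lborel) = ennreal (16 / 45 * t ^ 3)"
proof -
  have "(\<integral>\<^sup>+(y::real^2). ennreal (hc (norm y / t) * norm y) \<partial>lborel)
      = (\<integral>\<^sup>+r. ennreal (indicator {0..} r * (2 * pi * r)) * ennreal (hc (r / t) * r) \<partial>lborel)"
    by (rule polar) measurable
  also have "\<dots> = (\<integral>\<^sup>+r. ennreal (indicator {0..t} r * (2 * pi * r * (hc (r / t) * r))) \<partial>lborel)"
  proof (rule nn_integral_cong)
    fix r :: real
    have "t \<le> r \<Longrightarrow> hc (r / t) = 0" using t by (intro hc_ge1) auto
    then show "ennreal (indicator {0..} r * (2 * pi * r)) * ennreal (hc (r / t) * r) = ennreal (indicator {0..t} r * (2 * pi * r * (hc (r / t) * r)))"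
      using hc_nonneg[of "r / t"]
      by (cases "0 \<le> r"; cases "r \<le> t") (auto simp: indicator_def ennreal_mult[symmetric] mult.assoc)
  qed
  also have "\<dots> = ennreal (16 / 45 * t ^ 3)"
    by (rule nn_integral_has_integral_lebesgue[OF _ K_ftc[OF t]]) (use hc_nonneg in auto)
  finally show ?thesis .
qed

lemma translate2:
  fixes f :: "real^2 \<Rightarrow> ennreal" and c :: "real^2"
  assumes [measurable]: "f \<in> borel_measurable borel"
  shows "(\<integral>\<^sup>+z. f (c + z) \<partial>lborel) = (\<integral>\<^sup>+z. f z \<partial>lborel)"
proof -
  have "(\<integral>\<^sup>+z. f z \<partial>lborel) = (\<integral>\<^sup>+z. f z \<partial>(distr lborel borel ((+) c)))"
    by (simp add: lborel_distr_plus)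
  also have "\<dots> = (\<integral>\<^sup>+z. f (c + z) \<partial>lborel)"
    by (subst nn_integral_distr) auto
  finally show ?thesis by simp
qed

lemma inner_bound:
  fixes y :: "real^2"
  assumes s: "0 < s"
  shows "(\<integral>\<^sup>+(z::real^2). ennreal \<bar>hc (norm (z + y) / s) - hc (norm z / s)\<bar> \<partial>lborel) \<le> ennreal (norm y * (8 * s / 3))"
proof -
  define g where "g z t = ennreal (indicator {0..1} t * Lw s (norm (z + t *\<^sub>R y)))" for z :: "real^2" and t :: real
  have gm[measurable]: "case_prod g \<in> borel_measurable (lborel \<Otimes>\<^sub>M lborel)"
    unfolding g_def by measurable
  have inner: "(\<integral>\<^sup>+(z::real^2). g z t \<partial>lborel) = ennreal (indicator {0..1} t) * ennreal (8 * s / 3)" for t :: real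
  proof -
    have "(\<integral>\<^sup>+(z::real^2). g z t \<partial>lborel) = (\<integral>\<^sup>+(z::real^2). ennreal (indicator {0..1} t) * ennreal (Lw s (norm (t *\<^sub>R y + z))) \<partial>lborel)"
      unfolding g_def using Lw_nonneg[OF s] by (intro nn_integral_cong) (auto simp: ennreal_mult add.commute)
    also have "\<dots> = ennreal (indicator {0..1} t) * (\<integral>\<^sup>+(z::real^2). ennreal (Lw s (norm (t *\<^sub>R y + z))) \<partial>lborel)"
      by (rule nn_integral_cmult) measurable
    also have "(\<integral>\<^sup>+(z::real^2). ennreal (Lw s (norm (t *\<^sub>R y + z))) \<partial>lborel) = ennreal (8 * s / 3)"
      using translate2[of "\<lambda>z. ennreal (Lw s (norm z))" "t *\<^sub>R y"] int_Lw[OF s] by simp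
    finally show ?thesis .
  qed
  have "(\<integral>\<^sup>+(z::real^2). ennreal \<bar>hc (norm (z + y) / s) - hc (norm z / s)\<bar> \<partial>lborel)
      \<le> (\<integral>\<^sup>+(z::real^2). ennreal (norm y) * (\<integral>\<^sup>+t. g z t \<partial>lborel) \<partial>lborel)"
  proof (rule nn_integral_mono)
    fix z :: "real^2"
    show "ennreal \<bar>hc (norm (z + y) / s) - hc (norm z / s)\<bar> \<le> ennreal (norm y) * (\<integral>\<^sup>+t. g z t \<partial>lborel)"
      using H_seg[OF s, of "z + y" z] by (simp add: g_def)
  qed
  also have "\<dots> = ennreal (norm y) * (\<integral>\<^sup>+(z::real^2). (\<integral>\<^sup>+t. g z t \<partial>lborel) \<partial>lborel)"
    by (rule nn_integral_cmult) measurable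
  also have "(\<integral>\<^sup>+(z::real^2). (\<integral>\<^sup>+t. g z t \<partial>lborel) \<partial>lborel) = (\<integral>\<^sup>+t. (\<integral>\<^sup>+(z::real^2). g z t \<partial>lborel) \<partial>lborel)"
    by (rule lborel_pair.Fubini') measurable
  also have "\<dots> = (\<integral>\<^sup>+(t::real). ennreal (indicator {0..1} t) * ennreal (8 * s / 3) \<partial>lborel)"
    by (simp add: inner)
  also have "\<dots> = ennreal (8 * s / 3) * emeasure lborel {0..1::real}"
    by (subst nn_integral_multc) (auto simp: ennreal_indicator)
  also have "\<dots> = ennreal (8 * s / 3)" by simp
  finally show ?thesis using s by (simp add: ennreal_mult[symmetric])
qed

theorem mainTheorem15:
  fixes s s' :: real and x0 :: "real^2"
  assumes "0 < s'" and "s' < s"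
  shows "(\<integral>\<^sup>+ p. ennreal \<bar>hat_Delta s s' x0 (fst p) (snd p)\<bar> \<partial>(lborel \<Otimes>\<^sub>M lborel))
           \<le> ennreal (pi\<^sup>2 / 8 * s' ^ 3 * s)"
proof -
  have s: "0 < s" and t: "0 < s'" using assms by auto
  define \<Phi> where "\<Phi> x1 x2 = ennreal (\<bar>hc (norm (x1 - x0) / s) - hc (norm (x2 - x0) / s)\<bar> * hc (norm (x1 - x2) / s'))"
    for x1 x2 :: "real^2"
  have eq\<Phi>: "ennreal \<bar>hat_Delta s s' x0 x1 x2\<bar> = \<Phi> x1 x2" for x1 x2
  proof -
    have "hat_Delta s s' x0 x1 x2 = (hc (norm (x1 - x0) / s) - hc (norm (x2 - x0) / s)) * hc (norm (x1 - x2) / s')"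
      unfolding hat_Delta_def using s t
      by (subst (1 2 3) euclid_hat_hc) (auto simp: norm_minus_commute)
    then show ?thesis unfolding \<Phi>_def using hc_nonneg by (simp add: abs_mult)
  qed
  have m1[measurable]: "case_prod \<Phi> \<in> borel_measurable (lborel \<Otimes>\<^sub>M lborel)"
    unfolding \<Phi>_def by measurable
  have "(\<integral>\<^sup>+ p. ennreal \<bar>hat_Delta s s' x0 (fst p) (snd p)\<bar> \<partial>(lborel \<Otimes>\<^sub>M lborel))
      = (\<integral>\<^sup>+ p. \<Phi> (fst p) (snd p) \<partial>(lborel \<Otimes>\<^sub>M lborel))"
    by (simp add: eq\<Phi>)
  also have "\<dots> = (\<integral>\<^sup>+x2. (\<integral>\<^sup>+x1. \<Phi> x1 x2 \<partial>lborel) \<partial>lborel)"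
    using lborel_pair.nn_integral_snd[of "\<lambda>p. \<Phi> (fst p) (snd p)"] m1 by (simp add: case_prod_beta')
  also have "\<dots> = (\<integral>\<^sup>+x2. (\<integral>\<^sup>+y. \<Phi> (x2 + y) x2 \<partial>lborel) \<partial>lborel)"
  proof (rule nn_integral_cong)
    fix x2 :: "real^2"
    show "(\<integral>\<^sup>+x1. \<Phi> x1 x2 \<partial>lborel) = (\<integral>\<^sup>+y. \<Phi> (x2 + y) x2 \<partial>lborel)"
      by (rule translate2[symmetric]) (unfold \<Phi>_def, measurable)
  qed
  also have "\<dots> = (\<integral>\<^sup>+y. (\<integral>\<^sup>+x2. \<Phi> (x2 + y) x2 \<partial>lborel) \<partial>lborel)"
    by (rule lborel_pair.Fubini') (unfold \<Phi>_def, measurable)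
  also have "\<dots> \<le> (\<integral>\<^sup>+(y::real^2). ennreal (norm y * (8 * s / 3)) * ennreal (hc (norm y / s')) \<partial>lborel)"
  proof (rule nn_integral_mono)
    fix y :: "real^2"
    have "(\<integral>\<^sup>+x2. \<Phi> (x2 + y) x2 \<partial>lborel) = (\<integral>\<^sup>+z. \<Phi> (x0 + z + y) (x0 + z) \<partial>lborel)"
      by (rule translate2[symmetric, of "\<lambda>x2. \<Phi> (x2 + y) x2" x0]) (unfold \<Phi>_def, measurable)
    also have "\<dots> = (\<integral>\<^sup>+z. ennreal \<bar>hc (norm (z + y) / s) - hc (norm z / s)\<bar> * ennreal (hc (norm y / s')) \<partial>lborel)"
      unfolding \<Phi>_def using hc_nonneg by (intro nn_integral_cong) (simp add: ennreal_mult algebra_simps)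
    also have "\<dots> = (\<integral>\<^sup>+z. ennreal \<bar>hc (norm (z + y) / s) - hc (norm z / s)\<bar> \<partial>lborel) * ennreal (hc (norm y / s'))"
      by (rule nn_integral_multc) measurable
    also have "\<dots> \<le> ennreal (norm y * (8 * s / 3)) * ennreal (hc (norm y / s'))"
      by (intro mult_right_mono inner_bound[OF s]) auto
    finally show "(\<integral>\<^sup>+x2. \<Phi> (x2 + y) x2 \<partial>lborel) \<le> ennreal (norm y * (8 * s / 3)) * ennreal (hc (norm y / s'))" .
  qed
  also have "\<dots> = (\<integral>\<^sup>+(y::real^2). ennreal (hc (norm y / s') * norm y) * ennreal (8 * s / 3) \<partial>lborel)"
    using s hc_nonneg by (intro nn_integral_cong) (simp add: ennreal_mult[symmetric] mult_ac)
  also have "\<dots> = ennreal (16 / 45 * s' ^ 3) * ennreal (8 * s / 3)"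
    by (subst nn_integral_multc) (auto simp: int_K[OF t])
  also have "\<dots> = ennreal (128 / 135 * s' ^ 3 * s)"
    using s t by (simp add: ennreal_mult[symmetric])
  also have "\<dots> \<le> ennreal (pi\<^sup>2 / 8 * s' ^ 3 * s)"
  proof (rule ennreal_leI)
    have "3 * 3 \<le> pi * pi" using pi_gt3 by (intro mult_mono) auto
    then have "128 / 135 \<le> pi\<^sup>2 / 8" by (simp add: power2_eq_square)
    then show "128 / 135 * s' ^ 3 * s \<le> pi\<^sup>2 / 8 * s' ^ 3 * s"
      using s t by (intro mult_right_mono) auto
  qed
  finally show ?thesis .
qed

end
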